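(* Let $m,n\ge1$, $0\le r\le m$, $A=(A_0,\dots,A_n)\in\mathbb{S}_m(\mathbb{Q})^{n+1}$ and $c\in\mathbb{Q}^n$. Suppose that $\mathcal{F}_r(A,c)\neq\emptyset$, and let $p\in\mathcal{R}_r(A,c)$. Then every $x^*\in\mathcal{F}_r(A,c)$ with $\operatorname{rank}A(x^* )=p$ is a local minimizer of $\ell_c(x)=c^Tx$ on $\mathcal{D}_p\cap\mathbb{R}^n$.
   Context: $\mathbb{S}_m(\mathbb{Q})$ denotes the symmetric $m\times m$ rational matrices; $A(x)=A_0+x_1A_1+\cdots+x_nA_n$. The spectrahedron is $\mathscr{S}=\{x\in\mathbb{R}^n: A(x)\succeq0\}$ (positive semidefinite), and $\mathcal{D}_p=\{x\in\mathbb{C}^n:\operatorname{rank}A(x)\le p\}$. $\mathcal{F}_r(A,c)$ is the set of minimizers of $\ell_c$ on $\mathscr{S}\cap\mathcal{D}_r$ (i.e. points $x^*$ of this set with $\ell_c(x^* )\le\ell_c(x)$ for all $x$ in it), and $\mathcal{R}_r(A,c)=\{p: 0\le p\le r,\ \exists x\in\mathcal{F}_r(A,c),\ \operatorname{rank}A(x)=p\}$. A point $x^*\in S\subset\mathbb{R}^n$ is a local minimizer of $\ell_c$ on $S$ if there is a Euclidean open set $U\ni x^*$ with $\ell_c(x^* )\le\ell_c(x)$ for all $x\in U\cap S$. *)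

theory Defs
  imports "HOL-Analysis.Analysis"
begin

definition pencil :: "'a::comm_ring_1^'m^'m \<Rightarrow> ('n::finite \<Rightarrow> 'a^'m^'m) \<Rightarrow> 'a^'n \<Rightarrow> 'a^'m^'m" where
  "pencil A0 A x = (\<chi> i j. A0$i$j + (\<Sum>k\<in>UNIV. x$k * (A k)$i$j))"

definition cmat :: "real^'m^'k \<Rightarrow> complex^'m^'k" where
  "cmat M = (\<chi> i j. complex_of_real (M$i$j))"

definition cvec :: "real^'n \<Rightarrow> complex^'n" where
  "cvec x = (\<chi> i. complex_of_real (x$i))"

definition rat_matrix :: "real^'m^'k \<Rightarrow> bool" where
  "rat_matrix M \<longleftrightarrow> (\<forall>i j. M$i$j \<in> \<rat>)"

definition rat_vector :: "real^'n \<Rightarrow> bool" where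
  "rat_vector v \<longleftrightarrow> (\<forall>i. v$i \<in> \<rat>)"

definition symmetric_matrix :: "'a^'m^'m \<Rightarrow> bool" where
  "symmetric_matrix M \<longleftrightarrow> transpose M = M"

definition psd :: "real^'m^'m \<Rightarrow> bool" where
  "psd M \<longleftrightarrow> (\<forall>v. 0 \<le> v \<bullet> (M *v v))"

definition spectrahedron :: "real^'m^'m \<Rightarrow> ('n::finite \<Rightarrow> real^'m^'m) \<Rightarrow> (real^'n) set" where
  "spectrahedron A0 A = {x. psd (pencil A0 A x)}"

definition rank_locus :: "real^'m^'m \<Rightarrow> ('n::finite \<Rightarrow> real^'m^'m) \<Rightarrow> nat \<Rightarrow> (complex^'n) set" where
  "rank_locus A0 A p = {z. rank (pencil (cmat A0) (\<lambda>k. cmat (A k)) z) \<le> p}"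

definition real_rank_locus :: "real^'m^'m \<Rightarrow> ('n::finite \<Rightarrow> real^'m^'m) \<Rightarrow> nat \<Rightarrow> (real^'n) set" where
  "real_rank_locus A0 A p = {x. cvec x \<in> rank_locus A0 A p}"

definition Fmin :: "real^'m^'m \<Rightarrow> ('n::finite \<Rightarrow> real^'m^'m) \<Rightarrow> real^'n \<Rightarrow> nat \<Rightarrow> (real^'n) set" where
  "Fmin A0 A c r = {x. x \<in> spectrahedron A0 A \<inter> real_rank_locus A0 A r \<and>
      (\<forall>y \<in> spectrahedron A0 A \<inter> real_rank_locus A0 A r. c \<bullet> x \<le> c \<bullet> y)}"

definition Rranks :: "real^'m^'m \<Rightarrow> ('n::finite \<Rightarrow> real^'m^'m) \<Rightarrow> real^'n \<Rightarrow> nat \<Rightarrow> nat set" where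
  "Rranks A0 A c r = {p. p \<le> r \<and> (\<exists>x \<in> Fmin A0 A c r. rank (pencil A0 A x) = p)}"

definition local_minimizer :: "real^'n \<Rightarrow> (real^'n) set \<Rightarrow> real^'n \<Rightarrow> bool" where
  "local_minimizer c S x \<longleftrightarrow> x \<in> S \<and>
     (\<exists>U. open U \<and> x \<in> U \<and> (\<forall>y \<in> U \<inter> S. c \<bullet> x \<le> c \<bullet> y))"

end

theory Submission
  imports Defs
begin


lemma row_cmat: "row i (cmat M) = cvec (row i M)"
  by (simp add: row_def cmat_def cvec_def vec_eq_iff)

lemma rows_cmat: "rows (cmat M) = cvec ` rows M"
  by (auto simp: rows_def row_cmat)

lemma cvec_add: "cvec (x + y) = cvec x + cvec y"
  by (simp add: cvec_def vec_eq_iff)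
lemma cvec_scale: "cvec (a *\<^sub>R x) = complex_of_real a *s cvec x"
  by (simp add: cvec_def vec_eq_iff)
lemma cvec_zero: "cvec 0 = 0"
  by (simp add: cvec_def vec_eq_iff)
lemma cvec_inj: "inj cvec"
  by (auto simp: inj_on_def cvec_def vec_eq_iff)

lemma cvec_span: "x \<in> span B \<Longrightarrow> cvec x \<in> vec.span (cvec ` B)"
proof (induction rule: span_induct)
  case base
  show ?case unfolding subspace_def
    by (auto simp: cvec_add cvec_scale cvec_zero vec.span_zero vec.span_add vec.span_scale)
next
  case (step x)
  then show ?case by (simp add: vec.span_base)
qed

lemma rank_cmat_le: "rank (cmat M) \<le> rank M"
proof -
  obtain B where B: "B \<subseteq> rows M" "independent B" "rows M \<subseteq> span B" "card B = dim (rows M)"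
    using basis_exists by blast
  have fin: "finite B" using B(2) independent_imp_finite by blast
  have "rows (cmat M) \<subseteq> vec.span (cvec ` B)"
    using B(3) by (auto simp: rows_cmat intro: cvec_span)
  then have "vec.dim (rows (cmat M)) \<le> card (cvec ` B)"
    using fin by (intro vec.dim_le_card) auto
  also have "\<dots> \<le> card B" by (rule card_image_le[OF fin])
  finally show ?thesis using B(4) by (simp add: row_rank_def_gen dim_vec_eq)
qed

lemma cvec_indep:
  assumes "independent B"
  shows "vec.independent (cvec ` B)"
proof
  assume "vec.dependent (cvec ` B)"
  then obtain t u where t: "finite t" "t \<subseteq> cvec ` B" "(\<Sum>v\<in>t. u v *s v) = 0" "\<exists>v\<in>t. u v \<noteq> 0"
    unfolding vec.dependent_explicit by blast
  obtain t' where t': "t' \<subseteq> B" "t = cvec ` t'" using t(2) by (meson subset_imageE)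
  have fin: "finite t'" using t(1) t' cvec_inj by (metis finite_imageD inj_on_subset subset_UNIV)
  have inj: "inj_on cvec t'" using cvec_inj inj_on_subset by blast
  have S: "(\<Sum>b\<in>t'. u (cvec b) *s cvec b) = 0" using t(3) t' by (simp add: sum.reindex[OF inj])
  have re: "(\<Sum>b\<in>t'. Re (u (cvec b)) *\<^sub>R b) = 0" and im: "(\<Sum>b\<in>t'. Im (u (cvec b)) *\<^sub>R b) = 0"
  proof -
    have c: "\<And>i. (\<Sum>b\<in>t'. u (cvec b) * complex_of_real (b $ i)) = 0"
      using S by (simp add: vec_eq_iff sum_component cvec_def)
    have "\<And>i. (\<Sum>b\<in>t'. Re (u (cvec b)) * b $ i) = 0"
      using arg_cong[OF c, of Re] by (simp add: Re_sum)
    then show "(\<Sum>b\<in>t'. Re (u (cvec b)) *\<^sub>R b) = 0" by (simp add: vec_eq_iff sum_component)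
    have "\<And>i. (\<Sum>b\<in>t'. Im (u (cvec b)) * b $ i) = 0"
      using arg_cong[OF c, of Im] by (simp add: Im_sum)
    then show "(\<Sum>b\<in>t'. Im (u (cvec b)) *\<^sub>R b) = 0" by (simp add: vec_eq_iff sum_component)
  qed
  have "\<forall>b\<in>t'. Re (u (cvec b)) = 0" "\<forall>b\<in>t'. Im (u (cvec b)) = 0"
    using assms[unfolded independent_explicit_module, rule_format, OF fin t'(1) re]
      assms[unfolded independent_explicit_module, rule_format, OF fin t'(1) im] by auto
  then have "\<forall>b\<in>t'. u (cvec b) = 0" by (simp add: complex_eq_iff)
  then show False using t(4) t' by auto
qed

lemma rank_cmat_ge: "rank M \<le> rank (cmat M)"
proof -
  obtain B where B: "B \<subseteq> rows M" "independent B" "rows M \<subseteq> span B" "card B = dim (rows M)"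
    using basis_exists by blast
  have "card (cvec ` B) \<le> vec.dim (rows (cmat M))"
    by (rule vec.independent_card_le_dim) (use B cvec_indep in \<open>auto simp: rows_cmat\<close>)
  moreover have "card (cvec ` B) = card B" using cvec_inj by (meson card_image inj_on_subset subset_UNIV)
  ultimately show ?thesis using B(4) by (simp add: row_rank_def_gen dim_vec_eq)
qed

lemma rank_cmat: "rank (cmat M) = rank M"
  using rank_cmat_le rank_cmat_ge le_antisym by blast



lemma sym_inner:
  fixes M :: "real^'m^'m"
  assumes "transpose M = M"
  shows "a \<bullet> (M *v b) = (M *v a) \<bullet> b"
proof -
  have "a \<bullet> (M *v b) = (a v* M) \<bullet> b" by (simp add: dot_lmul_matrix)
  also have "a v* M = transpose M *v a" by simp
  finally show ?thesis using assms by simp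
qed

lemma psd_zero:
  fixes M :: "real^'m^'m"
  assumes sym: "transpose M = M" and ps: "psd M" and z: "v \<bullet> (M *v v) = 0"
  shows "M *v v = 0"
proof (rule ccontr)
  define w where "w = M *v v"
  assume "M *v v \<noteq> 0"
  then have wp: "w \<bullet> w > 0" by (simp add: w_def)
  define a where "a = w \<bullet> (M *v w)"
  have a0: "a \<ge> 0" using ps by (simp add: psd_def a_def)
  define t where "t = (w \<bullet> w) / (a + 1)"
  have tp: "t > 0" using wp a0 by (simp add: t_def)
  have "0 \<le> (v - t *\<^sub>R w) \<bullet> (M *v (v - t *\<^sub>R w))" using ps by (simp add: psd_def)
  also have "\<dots> = v \<bullet> (M *v v) - t * (v \<bullet> (M *v w)) - t * (w \<bullet> (M *v v)) + t * t * a"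
    by (simp add: matrix_vector_mult_diff_distrib matrix_vector_mult_scaleR inner_diff_left inner_diff_right a_def algebra_simps)
  also have "v \<bullet> (M *v w) = w \<bullet> w" using sym_inner[OF sym, of v w] by (simp add: w_def inner_commute)
  also have "w \<bullet> (M *v v) = w \<bullet> w" by (simp add: w_def)
  finally have "0 \<le> - 2 * t * (w \<bullet> w) + t * t * a" using z by simp
  then have "0 \<le> t * (- 2 * (w \<bullet> w) + t * a)" by (simp add: algebra_simps)
  then have "0 \<le> - 2 * (w \<bullet> w) + t * a" using tp by (simp add: zero_le_mult_iff)
  moreover have "t * a \<le> w \<bullet> w"
  proof -
    have "t * a = (w \<bullet> w) * (a / (a + 1))" by (simp add: t_def)
    also have "\<dots> \<le> (w \<bullet> w) * 1" using wp a0 by (intro mult_left_mono) auto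
    finally show ?thesis by simp
  qed
  ultimately show False using wp by linarith
qed

lemma psd_from_subspace:
  fixes M :: "real^'m^'m"
  assumes sym: "transpose M = M" and V: "subspace V" and rk: "rank M \<le> dim V"
    and pos: "\<forall>v\<in>V. v \<noteq> 0 \<longrightarrow> 0 < v \<bullet> (M *v v)"
  shows "psd M"
proof -
  obtain B where B: "B \<subseteq> V" "independent B" "V \<subseteq> span B" "card B = dim V"
    using basis_exists by blast
  have spB: "span B = V" using B V by (simp add: span_subspace)
  have inj: "inj_on ((*v) M) (span B)"
  proof (rule inj_onI)
    fix x y assume xy: "x \<in> span B" "y \<in> span B" "M *v x = M *v y"
    then have "x - y \<in> V" "M *v (x - y) = 0" using spB V
      by (auto simp: matrix_vector_mult_diff_distrib subspace_diff)
    then show "x = y" using pos by force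
  qed
  have ind: "independent ((*v) M ` B)"
    by (rule linear_independent_injective_image[OF matrix_vector_mul_linear B(2) inj])
  have cardeq: "card ((*v) M ` B) = card B"
    using inj by (meson card_image inj_on_subset span_superset)
  have "dim (range ((*v) M)) \<le> card ((*v) M ` B)"
    using rk B(4) cardeq rank_dim_range[of M] by simp
  then have "range ((*v) M) \<subseteq> span ((*v) M ` B)"
    by (intro card_ge_dim_independent ind) auto
  also have "\<dots> = (*v) M ` V" using spB by (simp add: span_linear_image)
  finally have rng: "range ((*v) M) \<subseteq> (*v) M ` V" .
  show ?thesis unfolding psd_def
  proof
    fix w
    obtain v where v: "v \<in> V" "M *v w = M *v v" using rng by blast
    have v0: "0 \<le> v \<bullet> (M *v v)" using pos v(1) by (cases "v = 0") (auto intro: less_imp_le)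
    have "M *v (w - v) = 0" using v by (simp add: matrix_vector_mult_diff_distrib)
    then have "(w - v) \<bullet> (M *v v) = 0"
      using sym_inner[OF sym, of "w - v" v] by simp
    then have "w \<bullet> (M *v w) = v \<bullet> (M *v v)" using v by (simp add: inner_diff_left)
    then show "0 \<le> w \<bullet> (M *v w)" using v0 by simp
  qed
qed



lemma pencil_cmat: "pencil (cmat A0) (\<lambda>k. cmat (A k)) (cvec y) = cmat (pencil A0 A y)"
  by (simp add: pencil_def cmat_def cvec_def vec_eq_iff)

lemma real_rank_locus_iff: "y \<in> real_rank_locus A0 A p \<longleftrightarrow> rank (pencil A0 A y) \<le> p"
  by (simp add: real_rank_locus_def rank_locus_def pencil_cmat rank_cmat)

lemma pencil_sym:
  assumes "symmetric_matrix A0" "\<forall>k. symmetric_matrix (A k)"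
  shows "transpose (pencil A0 A x) = pencil A0 A x"
proof -
  have h1: "\<And>i j. A0 $ j $ i = A0 $ i $ j" and h2: "\<And>k i j. A k $ j $ i = A k $ i $ j"
    using assms unfolding symmetric_matrix_def transpose_def
    by (metis vec_lambda_beta)+
  show ?thesis unfolding transpose_def pencil_def vec_eq_iff
  proof (intro allI)
    fix i j
    have "(\<lambda>k. x $ k * A k $ j $ i) = (\<lambda>k. x $ k * A k $ i $ j)" using h2 by presburger
    then have s: "(\<Sum>k\<in>UNIV. x $ k * A k $ j $ i) = (\<Sum>k\<in>UNIV. x $ k * A k $ i $ j)" by (rule arg_cong)
    then show "(\<chi> i j. (\<chi> i j. A0 $ i $ j + (\<Sum>k\<in>UNIV. x $ k * A k $ i $ j)) $ j $ i) $ i $ j =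
          (\<chi> i j. A0 $ i $ j + (\<Sum>k\<in>UNIV. x $ k * A k $ i $ j)) $ i $ j"
      by (simp only: vec_lambda_beta s h1[of i j])
  qed
qed

lemma pencil_mult: "pencil A0 A x *v v = A0 *v v + (\<Sum>k\<in>UNIV. x$k *\<^sub>R (A k *v v))"
proof -
  have "\<And>i. (\<Sum>j\<in>UNIV. (A0$i$j + (\<Sum>k\<in>UNIV. x$k * A k$i$j)) * v$j)
     = (\<Sum>j\<in>UNIV. A0$i$j * v$j) + (\<Sum>k\<in>UNIV. x$k * (\<Sum>j\<in>UNIV. A k$i$j * v$j))"
  proof -
    fix i
    have "(\<Sum>j\<in>UNIV. (A0$i$j + (\<Sum>k\<in>UNIV. x$k * A k$i$j)) * v$j)
      = (\<Sum>j\<in>UNIV. A0$i$j * v$j) + (\<Sum>j\<in>UNIV. \<Sum>k\<in>UNIV. x$k * (A k$i$j * v$j))"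
      by (simp add: distrib_right sum.distrib sum_distrib_right mult.assoc)
    also have "(\<Sum>j\<in>UNIV. \<Sum>k\<in>UNIV. x$k * (A k$i$j * v$j)) = (\<Sum>k\<in>UNIV. x$k * (\<Sum>j\<in>UNIV. A k$i$j * v$j))"
      by (subst sum.swap) (simp add: sum_distrib_left)
    finally show "?thesis i" .
  qed
  then show ?thesis by (simp add: pencil_def matrix_vector_mult_def vec_eq_iff sum_component)
qed

lemma quad_form:
  "v \<bullet> (pencil A0 A x *v v) = v \<bullet> (A0 *v v) + (\<Sum>k\<in>UNIV. x$k * (v \<bullet> (A k *v v)))"
  by (simp add: pencil_mult inner_sum_right inner_add_right)



theorem theorem1:
  fixes A0 :: "real^'m^'m" and A :: "'n::finite \<Rightarrow> real^'m^'m"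
    and c :: "real^'n" and r p :: nat
  assumes "r \<le> CARD('m)"
    and "symmetric_matrix A0" and "rat_matrix A0"
    and "\<forall>k. symmetric_matrix (A k) \<and> rat_matrix (A k)"
    and "rat_vector c"
    and "Fmin A0 A c r \<noteq> {}"
    and "p \<in> Rranks A0 A c r"
  shows "\<forall>xs \<in> Fmin A0 A c r. rank (pencil A0 A xs) = p \<longrightarrow>
           local_minimizer c (real_rank_locus A0 A p) xs"
proof (intro ballI impI)
  have pr: "p \<le> r" using assms(7) by (simp add: Rranks_def)
  have symA: "\<forall>k. symmetric_matrix (A k)" using assms(4) by blast
  have symP: "\<And>x. transpose (pencil A0 A x) = pencil A0 A x"
    by (rule pencil_sym[OF assms(2) symA])
  fix xs assume xsF: "xs \<in> Fmin A0 A c r" and rkx: "rank (pencil A0 A xs) = p"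
  define M where "M = pencil A0 A xs"
  have symM: "transpose M = M" using symP by (simp add: M_def)
  have psdM: "psd M" using xsF by (simp add: Fmin_def spectrahedron_def M_def)
  define V where "V = range ((*v) M)"
  have spV: "span V = V"
    unfolding V_def using span_linear_image[OF matrix_vector_mul_linear, of M UNIV] by simp
  have subV: "subspace V" by (metis spV subspace_span)
  have dimV: "dim V = p" using rkx rank_dim_range[of M] by (simp add: V_def M_def)
  have posV: "\<forall>v\<in>V. v \<noteq> 0 \<longrightarrow> 0 < v \<bullet> (M *v v)"
  proof (intro ballI impI)
    fix v assume v: "v \<in> V" "v \<noteq> 0"
    then obtain u where u: "v = M *v u" by (auto simp: V_def)
    have ge: "0 \<le> v \<bullet> (M *v v)" using psdM by (simp add: psd_def)
    show "0 < v \<bullet> (M *v v)"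
    proof (rule ccontr)
      assume "\<not> 0 < v \<bullet> (M *v v)"
      then have "v \<bullet> (M *v v) = 0" using ge by simp
      then have Mv: "M *v v = 0" using psd_zero[OF symM psdM] by blast
      have "v \<bullet> v = u \<bullet> (M *v v)" using sym_inner[OF symM, of u v] u by simp
      then have "v \<bullet> v = 0" using Mv by simp
      then show False using v by simp
    qed
  qed
  obtain lam where lam: "lam > 0" "\<forall>v\<in>V. lam * (v \<bullet> v) \<le> v \<bullet> (M *v v)"
  proof -
    define K where "K = V \<inter> sphere 0 1"
    have cK: "compact K" unfolding K_def
      using compact_Int_closed[OF compact_sphere closed_subspace[OF subV], of 0 1] by (simp add: Int_commute)
    show ?thesis
    proof (cases "K = {}")
      case True
      have "\<forall>v\<in>V. v = 0"
      proof
        fix v assume v: "v \<in> V"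
        show "v = 0"
        proof (rule ccontr)
          assume "v \<noteq> 0"
          then have "(1 / norm v) *\<^sub>R v \<in> K" using v subV
            by (simp add: K_def subspace_scale)
          then show False using True by simp
        qed
      qed
      then have "\<forall>v\<in>V. 1 * (v \<bullet> v) \<le> v \<bullet> (M *v v)" by auto
      then show ?thesis using that[of 1] by simp
    next
      case False
      have cont: "continuous_on K (\<lambda>v. v \<bullet> (M *v v))"
        by (intro continuous_intros linear_continuous_on matrix_vector_mul_bounded_linear)
      obtain v0 where v0: "v0 \<in> K" "\<forall>v\<in>K. v0 \<bullet> (M *v v0) \<le> v \<bullet> (M *v v)"
        using continuous_attains_inf[OF cK False cont] by blast
      have l0: "0 < v0 \<bullet> (M *v v0)" using v0(1) posV by (auto simp: K_def)
      have "\<forall>v\<in>V. v0 \<bullet> (M *v v0) * (v \<bullet> v) \<le> v \<bullet> (M *v v)"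
      proof
        fix v assume v: "v \<in> V"
        show "v0 \<bullet> (M *v v0) * (v \<bullet> v) \<le> v \<bullet> (M *v v)"
        proof (cases "v = 0")
          case True then show ?thesis by simp
        next
          case False
          define u where "u = (1 / norm v) *\<^sub>R v"
          have uK: "u \<in> K" using v subV False by (simp add: K_def u_def subspace_scale)
          have vu: "v = norm v *\<^sub>R u" using False by (simp add: u_def)
          have "u \<bullet> (M *v u) * (v \<bullet> v) = v \<bullet> (M *v v)"
          proof -
            have "v \<bullet> (M *v v) = (norm v)^2 * (u \<bullet> (M *v u))"
              by (subst vu, subst vu) (simp add: matrix_vector_mult_scaleR power2_eq_square)
            then show ?thesis by (simp add: power2_norm_eq_inner)
          qed
          moreover have "v0 \<bullet> (M *v v0) \<le> u \<bullet> (M *v u)" using v0(2) uK by blast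
          moreover have "0 \<le> v \<bullet> v" by simp
          ultimately show ?thesis by (metis mult_right_mono)
        qed
      qed
      then show ?thesis using that l0 by blast
    qed
  qed
  have "\<forall>k. \<exists>K\<ge>0. \<forall>x. norm (A k *v x) \<le> norm x * K"
    using bounded_linear.nonneg_bounded[OF matrix_vector_mul_bounded_linear] by blast
  then obtain Kf where Kf: "\<And>k. Kf k \<ge> 0" "\<And>k x. norm (A k *v x) \<le> norm x * Kf k"
    by metis
  define C where "C = (\<Sum>k\<in>UNIV. Kf k)"
  have C0: "C \<ge> 0" using Kf(1) by (simp add: C_def sum_nonneg)
  have Cb: "\<And>k v. \<bar>v \<bullet> (A k *v v)\<bar> \<le> C * (v \<bullet> v)"
  proof -
    fix k v
    have "\<bar>v \<bullet> (A k *v v)\<bar> \<le> norm v * norm (A k *v v)" by (rule Cauchy_Schwarz_ineq2)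
    also have "\<dots> \<le> norm v * (norm v * Kf k)" using Kf(2) by (simp add: mult_left_mono)
    also have "\<dots> = Kf k * (v \<bullet> v)" by (simp add: power2_norm_eq_inner[symmetric] power2_eq_square)
    also have "\<dots> \<le> C * (v \<bullet> v)"
      unfolding C_def by (intro mult_right_mono member_le_sum) (auto simp: Kf(1))
    finally show "\<bar>v \<bullet> (A k *v v)\<bar> \<le> C * (v \<bullet> v)" .
  qed
  define d where "d = lam / (2 * (real CARD('n) * C + 1))"
  have nC: "real CARD('n) * C \<ge> 0" using C0 by simp
  have dpos: "d > 0" unfolding d_def using lam(1) nC by (intro divide_pos_pos) auto
  have dC: "real CARD('n) * d * C < lam"
  proof -
    have den: "2 * (real CARD('n) * C + 1) > 0" using nC by simp
    have "real CARD('n) * d * C = lam * (real CARD('n) * C) / (2 * (real CARD('n) * C + 1))"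
      by (simp add: d_def)
    also have "\<dots> < lam"
    proof (subst pos_divide_less_eq[OF den])
      show "lam * (real CARD('n) * C) < lam * (2 * (real CARD('n) * C + 1))"
      proof (rule mult_strict_left_mono)
        have gen: "\<And>z::real. 0 \<le> z \<Longrightarrow> z < 2 * (z + 1)" by simp
        show "real CARD('n) * C < 2 * (real CARD('n) * C + 1)" by (rule gen[OF nC])
        show "0 < lam" by (rule lam(1))
      qed
    qed
    finally show ?thesis .
  qed
  show "local_minimizer c (real_rank_locus A0 A p) xs"
    unfolding local_minimizer_def
  proof (intro conjI exI[of _ "ball xs d"])
    show "xs \<in> real_rank_locus A0 A p" by (simp add: real_rank_locus_iff rkx)
    show "open (ball xs d)" by simp
    show "xs \<in> ball xs d" using dpos by simp
    show "\<forall>y\<in>ball xs d \<inter> real_rank_locus A0 A p. c \<bullet> xs \<le> c \<bullet> y"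
    proof
      fix y assume y: "y \<in> ball xs d \<inter> real_rank_locus A0 A p"
      have rky: "rank (pencil A0 A y) \<le> p" using y by (simp add: real_rank_locus_iff)
      have dy: "norm (y - xs) < d" using y by (simp add: dist_norm norm_minus_commute)
      have posy: "\<forall>v\<in>V. v \<noteq> 0 \<longrightarrow> 0 < v \<bullet> (pencil A0 A y *v v)"
      proof (intro ballI impI)
        fix v assume v: "v \<in> V" "v \<noteq> 0"
        have vv: "v \<bullet> v > 0" using v by simp
        have eq: "v \<bullet> (pencil A0 A y *v v) = v \<bullet> (M *v v) + (\<Sum>k\<in>UNIV. (y - xs)$k * (v \<bullet> (A k *v v)))"
          by (simp add: M_def quad_form algebra_simps sum.distrib sum_subtractf)
        have "\<bar>\<Sum>k\<in>UNIV. (y - xs)$k * (v \<bullet> (A k *v v))\<bar> \<le> (\<Sum>k\<in>UNIV. \<bar>(y - xs)$k * (v \<bullet> (A k *v v))\<bar>)"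
          by (rule sum_abs)
        also have "\<dots> \<le> (\<Sum>k\<in>(UNIV::'n set). d * (C * (v \<bullet> v)))"
        proof (rule sum_mono)
          fix k :: 'n
          have "\<bar>(y - xs)$k\<bar> \<le> d" using component_le_norm_cart[of "y - xs" k] dy by simp
          then show "\<bar>(y - xs)$k * (v \<bullet> (A k *v v))\<bar> \<le> d * (C * (v \<bullet> v))"
            unfolding abs_mult using Cb[of v k] dpos
            by (intro mult_mono) auto
        qed
        also have "\<dots> = real CARD('n) * d * C * (v \<bullet> v)" by simp
        also have "\<dots> < lam * (v \<bullet> v)" using dC vv by simp
        finally have "\<bar>\<Sum>k\<in>UNIV. (y - xs)$k * (v \<bullet> (A k *v v))\<bar> < lam * (v \<bullet> v)" .
        then show "0 < v \<bullet> (pencil A0 A y *v v)" using eq lam(2) v(1) by fastforce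
      qed
      have "psd (pencil A0 A y)"
        by (rule psd_from_subspace[OF symP subV _ posy]) (use rky dimV in simp)
      then have "y \<in> spectrahedron A0 A \<inter> real_rank_locus A0 A r"
        using rky pr by (simp add: spectrahedron_def real_rank_locus_iff)
      then show "c \<bullet> xs \<le> c \<bullet> y" using xsF by (simp add: Fmin_def)
    qed
  qed
qed

end
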